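(* Let $X$ be a set, $\mathcal{F}\subseteq\mathcal{P}(X)$ a field, $\mathcal{E}\subseteq\mathcal{F}$ an arbitrary subset, and $(\mu^+,\mu^-)$ a conjugate pair of set functions on $\mathcal{F}$ such that $\mu^+(A)=\mu^-(A)$ for all $A\in\mathcal{E}$. Then the pseudometric space $(\mathcal{E}, d_{\mu^+})$ is complete if and only if the following condition holds: for every sequence $(A_i)_{i\in\mathbb{N}}$ in $\mathcal{E}$ such that the nets $\{\mu^+(\bigcup_{k=i}^j A_k): i,j\in\mathbb{N}, i\le j\}$ and $\{\mu^-(\bigcup_{k=i}^j A_k): i,j\in\mathbb{N}, i\le j\}$ converge to a common limit $L$, the net $\{\bigcup_{k=i}^j A_k: i,j\in\mathbb{N}, i\le j\}$ converges in $d_{\mu^+}$ to some $A\in\mathcal{E}$ with $\mu^+(A)=L$.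
   Context: A field is a family of subsets of $X$ containing $\emptyset$ and closed under complements and finite unions. $I_A$ denotes the indicator function of $A$. Consider $\mu^+,\mu^-:\mathcal{F}\to[0,1]$ with $\mu^\pm(\emptyset)=0$ and $\mu^\pm(X)=1$. $\mu^+$ is subadditive if $I_A\le I_B+I_C\implies \mu^+(A)\le\mu^+(B)+\mu^+(C)$; $\mu^-$ is superadditive if $I_A\ge I_B+I_C\implies\mu^-(A)\ge\mu^-(B)+\mu^-(C)$; $\mu^-$ is co-subadditive with respect to $\mu^+$ if $I_A\le I_B+I_C\implies\mu^-(A)\le\mu^-(B)+\mu^+(C)$; $\mu^+$ is co-superadditive with respect to $\mu^-$ if $I_A\ge I_B+I_C\implies\mu^+(A)\ge\mu^+(B)+\mu^-(C)$ (all for $A,B,C\in\mathcal{F}$). The pair $(\mu^+,\mu^-)$ is conjugate if all four properties hold. For subadditive $\mu^+$, $d_{\mu^+}(A,B):=\mu^+(A\triangle B)$ is a pseudometric on $\mathcal{F}$ (restricted to $\mathcal{E}$ here). The index set $\{(i,j): i\le j\}$ is directed by the product order $(i,j)\le(k,l)\iff i\le k$ and $j\le l$. *)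

theory Defs
  imports "HOL-Library.Indicator_Function"
begin

definition field_of_sets :: "'a set \<Rightarrow> 'a set set \<Rightarrow> bool" where
  "field_of_sets X F \<longleftrightarrow> F \<subseteq> Pow X \<and> {} \<in> F \<and>
     (\<forall>A\<in>F. X - A \<in> F) \<and> (\<forall>A\<in>F. \<forall>B\<in>F. A \<union> B \<in> F)"

definition subadditive :: "'a set \<Rightarrow> 'a set set \<Rightarrow> ('a set \<Rightarrow> real) \<Rightarrow> bool" where
  "subadditive X F mp \<longleftrightarrow> (\<forall>A\<in>F. \<forall>B\<in>F. \<forall>C\<in>F.
     (\<forall>x\<in>X. (indicator A x :: real) \<le> indicator B x + indicator C x) \<longrightarrow> mp A \<le> mp B + mp C)"

definition superadditive :: "'a set \<Rightarrow> 'a set set \<Rightarrow> ('a set \<Rightarrow> real) \<Rightarrow> bool" where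
  "superadditive X F mm \<longleftrightarrow> (\<forall>A\<in>F. \<forall>B\<in>F. \<forall>C\<in>F.
     (\<forall>x\<in>X. (indicator A x :: real) \<ge> indicator B x + indicator C x) \<longrightarrow> mm A \<ge> mm B + mm C)"

definition co_subadditive :: "'a set \<Rightarrow> 'a set set \<Rightarrow> ('a set \<Rightarrow> real) \<Rightarrow> ('a set \<Rightarrow> real) \<Rightarrow> bool" where
  "co_subadditive X F mm mp \<longleftrightarrow> (\<forall>A\<in>F. \<forall>B\<in>F. \<forall>C\<in>F.
     (\<forall>x\<in>X. (indicator A x :: real) \<le> indicator B x + indicator C x) \<longrightarrow> mm A \<le> mm B + mp C)"

definition co_superadditive :: "'a set \<Rightarrow> 'a set set \<Rightarrow> ('a set \<Rightarrow> real) \<Rightarrow> ('a set \<Rightarrow> real) \<Rightarrow> bool" where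
  "co_superadditive X F mp mm \<longleftrightarrow> (\<forall>A\<in>F. \<forall>B\<in>F. \<forall>C\<in>F.
     (\<forall>x\<in>X. (indicator A x :: real) \<ge> indicator B x + indicator C x) \<longrightarrow> mp A \<ge> mp B + mm C)"

definition set_function :: "'a set \<Rightarrow> 'a set set \<Rightarrow> ('a set \<Rightarrow> real) \<Rightarrow> bool" where
  "set_function X F m \<longleftrightarrow> (\<forall>A\<in>F. 0 \<le> m A \<and> m A \<le> 1) \<and> m {} = 0 \<and> m X = 1"

definition conjugate_pair :: "'a set \<Rightarrow> 'a set set \<Rightarrow> ('a set \<Rightarrow> real) \<Rightarrow> ('a set \<Rightarrow> real) \<Rightarrow> bool" where
  "conjugate_pair X F mp mm \<longleftrightarrow> set_function X F mp \<and> set_function X F mm \<and>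
     subadditive X F mp \<and> superadditive X F mm \<and>
     co_subadditive X F mm mp \<and> co_superadditive X F mp mm"

definition dmu :: "('a set \<Rightarrow> real) \<Rightarrow> 'a set \<Rightarrow> 'a set \<Rightarrow> real" where
  "dmu m A B = m ((A - B) \<union> (B - A))"

definition pm_complete :: "'b set \<Rightarrow> ('b \<Rightarrow> 'b \<Rightarrow> real) \<Rightarrow> bool" where
  "pm_complete E d \<longleftrightarrow> (\<forall>s :: nat \<Rightarrow> 'b. (\<forall>n. s n \<in> E) \<and>
       (\<forall>e>0. \<exists>N. \<forall>m\<ge>N. \<forall>n\<ge>N. d (s m) (s n) < e)
     \<longrightarrow> (\<exists>a\<in>E. \<forall>e>0. \<exists>N. \<forall>n\<ge>N. d (s n) a < e))"

text \<open>Convergence of a net indexed by {(i,j). i \<le> j}, directed by the product order,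
  towards a point a, with respect to a (pseudo)distance d.\<close>
definition net_conv :: "('b \<Rightarrow> 'b \<Rightarrow> real) \<Rightarrow> (nat \<Rightarrow> nat \<Rightarrow> 'b) \<Rightarrow> 'b \<Rightarrow> bool" where
  "net_conv d g a \<longleftrightarrow> (\<forall>e>0. \<exists>i0 j0. i0 \<le> j0 \<and>
       (\<forall>i j. i \<le> j \<and> i0 \<le> i \<and> j0 \<le> j \<longrightarrow> d (g i j) a < e))"

definition real_dist :: "real \<Rightarrow> real \<Rightarrow> real" where
  "real_dist x y = \<bar>x - y\<bar>"

end

theory Submission
  imports Defs Complex_Main
begin
locale cpl =
  fixes X :: "'a set" and F :: "'a set set" and mp mm :: "'a set \<Rightarrow> real"
  assumes fs: "field_of_sets X F" and cp: "conjugate_pair X F mp mm"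
begin

lemma inX: "A \<in> F \<Longrightarrow> A \<subseteq> X"
  using fs unfolding field_of_sets_def by blast

lemma emptyF: "{} \<in> F" using fs unfolding field_of_sets_def by blast

lemma UnF: "A \<in> F \<Longrightarrow> B \<in> F \<Longrightarrow> A \<union> B \<in> F"
  using fs unfolding field_of_sets_def by blast

lemma DiffF: assumes "A \<in> F" "B \<in> F" shows "A - B \<in> F"
proof -
  have c: "\<And>C. C \<in> F \<Longrightarrow> X - C \<in> F" using fs unfolding field_of_sets_def by blast
  have "A - B = X - ((X - A) \<union> B)" using inX[OF assms(1)] by blast
  thus ?thesis using c UnF assms by metis
qed

lemma SdF: "A \<in> F \<Longrightarrow> B \<in> F \<Longrightarrow> (A - B) \<union> (B - A) \<in> F"
  by (simp add: DiffF UnF)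

lemma finUnF: "finite S \<Longrightarrow> (\<forall>k\<in>S. f k \<in> F) \<Longrightarrow> (\<Union>k\<in>S. f k) \<in> F"
  by (induction S rule: finite_induct) (auto simp: emptyF UnF)

lemma ivUnF: "(\<forall>k. f k \<in> F) \<Longrightarrow> (\<Union>k\<in>{i..(j::nat)}. f k) \<in> F"
  by (rule finUnF) auto

lemma mp0: "mp {} = 0" and mm_bnd: "A \<in> F \<Longrightarrow> 0 \<le> mp A"
  using cp unfolding conjugate_pair_def set_function_def by auto

lemma sub: "A \<in> F \<Longrightarrow> B \<in> F \<Longrightarrow> C \<in> F \<Longrightarrow> A \<subseteq> B \<union> C \<Longrightarrow> mp A \<le> mp B + mp C"
  using cp unfolding conjugate_pair_def subadditive_def
  by (smt (verit, del_insts) Un_iff indicator_simps subset_eq)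

lemma cosub: "A \<in> F \<Longrightarrow> B \<in> F \<Longrightarrow> C \<in> F \<Longrightarrow> A \<subseteq> B \<union> C \<Longrightarrow> mm A \<le> mm B + mp C"
  using cp unfolding conjugate_pair_def co_subadditive_def
  by (smt (verit, del_insts) Un_iff indicator_simps subset_eq)

lemma cosup: "A \<in> F \<Longrightarrow> B \<in> F \<Longrightarrow> C \<in> F \<Longrightarrow> B \<union> C \<subseteq> A \<Longrightarrow> B \<inter> C = {} \<Longrightarrow> mp A \<ge> mp B + mm C"
  using cp unfolding conjugate_pair_def co_superadditive_def
  by (smt (verit, del_insts) Un_iff Int_iff empty_iff indicator_simps subset_eq)

lemma mono: "A \<in> F \<Longrightarrow> B \<in> F \<Longrightarrow> A \<subseteq> B \<Longrightarrow> mp A \<le> mp B"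
  using sub[of A B "{}"] emptyF mp0 by auto

lemma finsub: "finite S \<Longrightarrow> (\<forall>k\<in>S. f k \<in> F) \<Longrightarrow> mp (\<Union>k\<in>S. f k) \<le> (\<Sum>k\<in>S. mp (f k))"
proof (induction S rule: finite_induct)
  case empty then show ?case by (simp add: mp0)
next
  case (insert x S)
  have "mp (\<Union>k\<in>insert x S. f k) \<le> mp (f x) + mp (\<Union>k\<in>S. f k)"
    by (rule sub) (use insert finUnF UnF in auto)
  then show ?case using insert by auto
qed

lemma dsym: "dmu mp A B = dmu mp B A"
  unfolding dmu_def by (simp add: Un_commute)

lemma tri: "A \<in> F \<Longrightarrow> B \<in> F \<Longrightarrow> C \<in> F \<Longrightarrow> dmu mp A C \<le> dmu mp A B + dmu mp B C"
  unfolding dmu_def by (rule sub) (auto simp: SdF)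

lemma lip: "P \<in> F \<Longrightarrow> Q \<in> F \<Longrightarrow> \<bar>mp P - mp Q\<bar> \<le> dmu mp P Q"
proof -
  assume a: "P \<in> F" "Q \<in> F"
  have "mp P \<le> mp Q + dmu mp P Q" unfolding dmu_def by (rule sub) (use a SdF in auto)
  moreover have "mp Q \<le> mp P + dmu mp P Q" unfolding dmu_def by (rule sub) (use a SdF in auto)
  ultimately show ?thesis by linarith
qed

lemma lipm: "P \<in> F \<Longrightarrow> Q \<in> F \<Longrightarrow> \<bar>mm P - mm Q\<bar> \<le> dmu mp P Q"
proof -
  assume a: "P \<in> F" "Q \<in> F"
  have "mm P \<le> mm Q + dmu mp P Q" unfolding dmu_def by (rule cosub) (use a SdF in auto)
  moreover have "mm Q \<le> mm P + dmu mp P Q" unfolding dmu_def by (rule cosub) (use a SdF in auto)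
  ultimately show ?thesis by linarith
qed

lemma subd: "P \<in> F \<Longrightarrow> Q \<in> F \<Longrightarrow> P \<subseteq> Q \<Longrightarrow> dmu mp P Q \<le> mp Q - mm P"
proof -
  assume a: "P \<in> F" "Q \<in> F" "P \<subseteq> Q"
  have e: "(P - Q) \<union> (Q - P) = Q - P" using a by blast
  have "mp Q \<ge> mp (Q - P) + mm P" by (rule cosup) (use a DiffF in auto)
  thus ?thesis unfolding dmu_def e by linarith
qed

end
lemma abs_small_zero: "(\<And>e. e > 0 \<Longrightarrow> \<bar>x::real\<bar> < e) \<Longrightarrow> x = 0"
  by (metis abs_ge_zero abs_not_less_zero less_irrefl linorder_neqE_linordered_idom zero_less_abs_iff)

context cpl begin

lemma fwd:
  assumes EF: "E \<subseteq> F" and eq: "\<forall>A\<in>E. mp A = mm A"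
    and comp: "pm_complete E (dmu mp)"
    and AE: "\<forall>k. A k \<in> E"
    and n1: "net_conv real_dist (\<lambda>i j. mp (\<Union>k\<in>{i..j}. A k)) L"
    and n2: "net_conv real_dist (\<lambda>i j. mm (\<Union>k\<in>{i..j}. A k)) L"
  shows "\<exists>B\<in>E. net_conv (dmu mp) (\<lambda>i j. \<Union>k\<in>{i..j}. A k) B \<and> mp B = L"
proof -
  define U where "U i j = (\<Union>k\<in>{i..j}. A k)" for i j :: nat
  have AF: "\<forall>k. A k \<in> F" using AE EF by blast
  have UF: "U i j \<in> F" for i j unfolding U_def using ivUnF[OF AF] .
  have Ukk: "U k k = A k" for k unfolding U_def by simp
  have K: "\<exists>N. \<forall>i j. N \<le> i \<and> i \<le> j \<longrightarrow> dmu mp (U i j) (A j) < e \<and> dmu mp (A i) (U i j) < e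
              \<and> \<bar>mp (U i j) - L\<bar> < e" if e: "e > 0" for e
  proof -
    obtain i0 j0 where h1: "\<forall>i j. i \<le> j \<and> i0 \<le> i \<and> j0 \<le> j \<longrightarrow> \<bar>mp (U i j) - L\<bar> < e/2"
      using n1 e unfolding net_conv_def real_dist_def U_def by (metis half_gt_zero)
    obtain i1 j1 where h2: "\<forall>i j. i \<le> j \<and> i1 \<le> i \<and> j1 \<le> j \<longrightarrow> \<bar>mm (U i j) - L\<bar> < e/2"
      using n2 e unfolding net_conv_def real_dist_def U_def by (metis half_gt_zero)
    define N where "N = max (max i0 j0) (max i1 j1)"
    show ?thesis
    proof (intro exI allI impI)
      fix i j assume ij: "N \<le> i \<and> i \<le> j"
      have a: "\<bar>mp (U i j) - L\<bar> < e/2" using h1 ij unfolding N_def by auto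
      have b: "\<bar>mm (U i i) - L\<bar> < e/2" using h2 ij unfolding N_def by auto
      have c: "\<bar>mm (U j j) - L\<bar> < e/2" using h2 ij unfolding N_def by auto
      have s1: "A i \<subseteq> U i j" "A j \<subseteq> U i j" using ij unfolding U_def by auto
      have d1: "dmu mp (A i) (U i j) \<le> mp (U i j) - mm (A i)" by (rule subd) (use AF UF s1 in auto)
      have d2: "dmu mp (A j) (U i j) \<le> mp (U i j) - mm (A j)" by (rule subd) (use AF UF s1 in auto)
      show "dmu mp (U i j) (A j) < e \<and> dmu mp (A i) (U i j) < e \<and> \<bar>mp (U i j) - L\<bar> < e"
        using a b c d1 d2 dsym[of "U i j" "A j"] unfolding Ukk by linarith
    qed
  qed
  have cauchy: "\<forall>e>0. \<exists>N. \<forall>m\<ge>N. \<forall>n\<ge>N. dmu mp (A m) (A n) < e"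
  proof (intro allI impI)
    fix e :: real assume e: "e > 0"
    then obtain N where N: "\<forall>i j. N \<le> i \<and> i \<le> j \<longrightarrow> dmu mp (U i j) (A j) < e/2 \<and> dmu mp (A i) (U i j) < e/2"
      using K[of "e/2"] by auto
    have *: "dmu mp (A m) (A n) < e" if "N \<le> m" "m \<le> n" for m n
    proof -
      have "dmu mp (A m) (A n) \<le> dmu mp (A m) (U m n) + dmu mp (U m n) (A n)"
        by (rule tri) (use AF UF in auto)
      thus ?thesis using N that by fastforce
    qed
    show "\<exists>N. \<forall>m\<ge>N. \<forall>n\<ge>N. dmu mp (A m) (A n) < e"
    proof (intro exI allI impI)
      fix m n assume "N \<le> m" "N \<le> n"
      then show "dmu mp (A m) (A n) < e"
        using *[of m n] *[of n m] dsym[of "A m" "A n"] by (cases "m \<le> n") auto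
    qed
  qed
  obtain B where BE: "B \<in> E" and conv: "\<forall>e>0. \<exists>N. \<forall>n\<ge>N. dmu mp (A n) B < e"
    using comp AE cauchy unfolding pm_complete_def by blast
  have BF: "B \<in> F" using BE EF by blast
  have nc: "net_conv (dmu mp) U B"
    unfolding net_conv_def
  proof (intro allI impI)
    fix e :: real assume e: "e > 0"
    obtain N1 where N1: "\<forall>i j. N1 \<le> i \<and> i \<le> j \<longrightarrow> dmu mp (U i j) (A j) < e/2"
      using K[of "e/2"] e by auto
    obtain N2 where N2: "\<forall>n\<ge>N2. dmu mp (A n) B < e/2" using conv e by (metis half_gt_zero)
    show "\<exists>i0 j0. i0 \<le> j0 \<and> (\<forall>i j. i \<le> j \<and> i0 \<le> i \<and> j0 \<le> j \<longrightarrow> dmu mp (U i j) B < e)"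
    proof (intro exI conjI allI impI)
      show "max N1 N2 \<le> max N1 N2" by simp
      fix i j assume ij: "i \<le> j \<and> max N1 N2 \<le> i \<and> max N1 N2 \<le> j"
      have "dmu mp (U i j) B \<le> dmu mp (U i j) (A j) + dmu mp (A j) B"
        by (rule tri) (use AF UF BF in auto)
      moreover have "dmu mp (U i j) (A j) < e/2" using N1 ij by auto
      moreover have "dmu mp (A j) B < e/2" using N2 ij by auto
      ultimately show "dmu mp (U i j) B < e" by linarith
    qed
  qed
  have "mp B - L = 0"
  proof (rule abs_small_zero)
    fix e :: real assume e: "e > 0"
    obtain N1 where N1: "\<forall>i j. N1 \<le> i \<and> i \<le> j \<longrightarrow> \<bar>mp (U i j) - L\<bar> < e/2"
      using K[of "e/2"] e by auto
    obtain N2 where N2: "\<forall>n\<ge>N2. dmu mp (A n) B < e/2" using conv e by (metis half_gt_zero)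
    define n where "n = max N1 N2"
    have "\<bar>mp (A n) - mp B\<bar> \<le> dmu mp (A n) B" by (rule lip) (use AF BF in auto)
    moreover have "\<bar>mp (A n) - L\<bar> < e/2" using N1[rule_format, of n n] Ukk n_def by auto
    moreover have "dmu mp (A n) B < e/2" using N2 n_def by auto
    ultimately show "\<bar>mp B - L\<bar> < e" by linarith
  qed
  thus ?thesis using BE nc unfolding U_def by auto
qed

end
lemma geo_sum: "(\<Sum>l\<in>{i..<j}. (1/2::real)^l) \<le> 2*(1/2)^i"
proof (cases "i \<le> j")
  case True
  then obtain m where j: "j = i + m" using le_Suc_ex by blast
  have "(\<Sum>l\<in>{i..<i+m}. (1/2::real)^l) = 2*(1/2)^i - 2*(1/2)^(i+m)"
    by (induction m) (auto simp: power_add)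
  then show ?thesis using j by simp
qed simp

context cpl begin

lemma bwd:
  assumes EF: "E \<subseteq> F" and eq: "\<forall>A\<in>E. mp A = mm A"
    and cond: "\<forall>(A :: nat \<Rightarrow> 'a set) (L :: real).
       (\<forall>k. A k \<in> E) \<and>
       net_conv real_dist (\<lambda>i j. mp (\<Union>k\<in>{i..j}. A k)) L \<and>
       net_conv real_dist (\<lambda>i j. mm (\<Union>k\<in>{i..j}. A k)) L
       \<longrightarrow> (\<exists>B\<in>E. net_conv (dmu mp) (\<lambda>i j. \<Union>k\<in>{i..j}. A k) B \<and> mp B = L)"
  shows "pm_complete E (dmu mp)"
  unfolding pm_complete_def
proof (intro allI impI)
  fix s :: "nat \<Rightarrow> 'a set"
  assume "(\<forall>n. s n \<in> E) \<and> (\<forall>e>0. \<exists>N. \<forall>m\<ge>N. \<forall>n\<ge>N. dmu mp (s m) (s n) < e)"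
  hence sE: "\<forall>n. s n \<in> E" and sc: "\<forall>e>0. \<exists>N. \<forall>m\<ge>N. \<forall>n\<ge>N. dmu mp (s m) (s n) < e" by auto
  have sF: "s n \<in> F" for n using sE EF by blast
  have "\<forall>k. \<exists>N. \<forall>m\<ge>N. \<forall>n\<ge>N. dmu mp (s m) (s n) < (1/2)^k"
    using sc by simp
  then obtain N where N: "\<And>k m n. m \<ge> N k \<Longrightarrow> n \<ge> N k \<Longrightarrow> dmu mp (s m) (s n) < (1/2)^k"
    by metis
  define n where "n k = Max (N ` {..k})" for k
  have Nn: "N k \<le> n k" for k unfolding n_def by (rule Max_ge) auto
  have nmono: "k \<le> k' \<Longrightarrow> n k \<le> n k'" for k k' unfolding n_def
    by (rule Max_mono) auto
  define A where "A k = s (n k)" for k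
  have AE: "A k \<in> E" for k unfolding A_def using sE by auto
  have AF: "A k \<in> F" for k unfolding A_def using sF by auto
  have Acl: "m \<ge> n k \<Longrightarrow> dmu mp (s m) (A k) < (1/2)^k" for m k
    unfolding A_def using N[of k m "n k"] Nn[of k] by auto
  have AA: "k \<le> l \<Longrightarrow> dmu mp (A l) (A k) < (1/2)^k" for k l
    using Acl[of k "n l"] nmono[of k l] unfolding A_def by auto
  define D where "D l = (A (Suc l) - A l) \<union> (A l - A (Suc l))" for l
  have DF: "D l \<in> F" for l unfolding D_def using SdF AF by auto
  have Dle: "mp (D l) \<le> (1/2)^l" for l
    using AA[of l "Suc l"] unfolding D_def dmu_def by auto
  define U where "U i j = (\<Union>k\<in>{i..j}. A k)" for i j :: nat
  have UF: "U i j \<in> F" for i j unfolding U_def using ivUnF AF by auto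
  define V where "V i j = (\<Union>l\<in>{i..<j}. D l)" for i j :: nat
  have VF: "V i j \<in> F" for i j unfolding V_def using finUnF DF by auto
  have incl: "\<forall>x\<in>A k. x \<in> A i \<union> V i k" if "i \<le> k" for i k
    using that
  proof (induction k rule: dec_induct)
    case base then show ?case by auto
  next
    case (step k)
    have sub: "V i k \<subseteq> V i (Suc k)" unfolding V_def by (rule UN_mono) auto
    have Dk: "D k \<subseteq> V i (Suc k)" unfolding V_def using step(1) by auto
    show ?case
    proof
      fix x assume x: "x \<in> A (Suc k)"
      show "x \<in> A i \<union> V i (Suc k)"
      proof (cases "x \<in> A k")
        case True then show ?thesis using step.IH sub by blast
      next
        case False then have "x \<in> D k" using x unfolding D_def by auto
        then show ?thesis using Dk by blast
      qed
    qed
  qed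
  have UA: "dmu mp (U i j) (A i) \<le> 2*(1/2)^i" if ij: "i \<le> j" for i j
  proof -
    have s1: "U i j - A i \<subseteq> V i j"
    proof
      fix x assume "x \<in> U i j - A i"
      then obtain k where k: "i \<le> k" "k \<le> j" "x \<in> A k" "x \<notin> A i" unfolding U_def by auto
      then have "x \<in> V i k" using incl[OF k(1)] by blast
      moreover have "V i k \<subseteq> V i j" unfolding V_def by (rule UN_mono) (use k in auto)
      ultimately show "x \<in> V i j" by blast
    qed
    have e: "(U i j - A i) \<union> (A i - U i j) = U i j - A i" using ij unfolding U_def by auto
    have "dmu mp (U i j) (A i) = mp (U i j - A i)" unfolding dmu_def e ..
    also have "\<dots> \<le> mp (V i j)" by (rule mono) (use s1 DiffF UF AF VF in auto)
    also have "\<dots> \<le> (\<Sum>l\<in>{i..<j}. mp (D l))" unfolding V_def by (rule finsub) (use DF in auto)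
    also have "\<dots> \<le> (\<Sum>l\<in>{i..<j}. (1/2)^l)" by (rule sum_mono) (use Dle in auto)
    also have "\<dots> \<le> 2*(1/2)^i" by (rule geo_sum)
    finally show ?thesis .
  qed
  have small: "\<exists>k. \<forall>i\<ge>k. 2*(1/2::real)^i < e" if "e > 0" for e
  proof -
    have "\<exists>k. (1/2::real)^k < e/2" by (rule real_arch_pow_inv) (use that in auto)
    then obtain k where k: "(1/2::real)^k < e/2" by blast
    have "2*(1/2::real)^i < e" if "i \<ge> k" for i
    proof -
      have "(1/2::real)^i \<le> (1/2)^k" using that by (simp add: power_decreasing)
      thus ?thesis using k by linarith
    qed
    thus ?thesis by blast
  qed
  have cau: "Cauchy (\<lambda>i. mp (A i))"
  proof (rule metric_CauchyI)
    fix e :: real assume e: "e > 0"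
    obtain k where k: "\<forall>i\<ge>k. 2*(1/2::real)^i < e" using small e by blast
    show "\<exists>M. \<forall>m\<ge>M. \<forall>n\<ge>M. dist (mp (A m)) (mp (A n)) < e"
    proof (intro exI allI impI)
      fix a b assume ab: "k \<le> a" "k \<le> b"
      have l: "\<bar>mp (A a) - mp (A b)\<bar> \<le> dmu mp (A a) (A b)" by (rule lip) (use AF in auto)
      have t: "dmu mp (A a) (A b) \<le> dmu mp (A a) (A k) + dmu mp (A k) (A b)"
        by (rule tri) (use AF in auto)
      have "dmu mp (A a) (A b) < 2*(1/2)^k"
        using AA[of k a] AA[of k b] ab t dsym[of "A k" "A b"] by auto
      then show "dist (mp (A a)) (mp (A b)) < e" using k l unfolding dist_real_def by force
    qed
  qed
  then obtain L where "(\<lambda>i. mp (A i)) \<longlonglongrightarrow> L"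
    using Cauchy_convergent_iff convergent_def by blast
  then have LL: "\<forall>r>0. \<exists>no. \<forall>i\<ge>no. \<bar>mp (A i) - L\<bar> < r"
    unfolding LIMSEQ_iff by simp
  have gen: "\<exists>i0. \<forall>i j. i \<le> j \<and> i0 \<le> i \<longrightarrow> \<bar>mp (U i j) - L\<bar> < e \<and> \<bar>mm (U i j) - L\<bar> < e"
    if e: "e > 0" for e
  proof -
    obtain k where k: "\<forall>i\<ge>k. 2*(1/2::real)^i < e/2" using small[of "e/2"] e by auto
    obtain no where no: "\<forall>i\<ge>no. \<bar>mp (A i) - L\<bar> < e/2" using LL e by (metis half_gt_zero)
    have c: "\<bar>mp (U i j) - L\<bar> < e \<and> \<bar>mm (U i j) - L\<bar> < e" if ij: "i \<le> j \<and> max k no \<le> i" for i j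
    proof -
      have a1: "\<bar>mp (U i j) - mp (A i)\<bar> \<le> dmu mp (U i j) (A i)" by (rule lip) (use UF AF in auto)
      have a2: "\<bar>mm (U i j) - mm (A i)\<bar> \<le> dmu mp (U i j) (A i)" by (rule lipm) (use UF AF in auto)
      have a3: "mm (A i) = mp (A i)" using eq AE by auto
      have a4: "dmu mp (U i j) (A i) \<le> 2*(1/2)^i" using UA ij by auto
      have a5: "2*(1/2::real)^i < e/2" using k ij by auto
      have a6: "\<bar>mp (A i) - L\<bar> < e/2" using no ij by auto
      show ?thesis using a1 a2 a3 a4 a5 a6 by linarith
    qed
    then show ?thesis by blast
  qed
  have net1: "net_conv real_dist (\<lambda>i j. mp (U i j)) L"
    unfolding net_conv_def real_dist_def
  proof (intro allI impI)
    fix e :: real assume "e > 0"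
    then obtain i0 where "\<forall>i j. i \<le> j \<and> i0 \<le> i \<longrightarrow> \<bar>mp (U i j) - L\<bar> < e \<and> \<bar>mm (U i j) - L\<bar> < e"
      using gen by blast
    then show "\<exists>i0 j0. i0 \<le> j0 \<and> (\<forall>i j. i \<le> j \<and> i0 \<le> i \<and> j0 \<le> j \<longrightarrow> \<bar>mp (U i j) - L\<bar> < e)"
      by (intro exI[of _ i0]) auto
  qed
  have net2: "net_conv real_dist (\<lambda>i j. mm (U i j)) L"
    unfolding net_conv_def real_dist_def
  proof (intro allI impI)
    fix e :: real assume "e > 0"
    then obtain i0 where "\<forall>i j. i \<le> j \<and> i0 \<le> i \<longrightarrow> \<bar>mp (U i j) - L\<bar> < e \<and> \<bar>mm (U i j) - L\<bar> < e"
      using gen by blast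
    then show "\<exists>i0 j0. i0 \<le> j0 \<and> (\<forall>i j. i \<le> j \<and> i0 \<le> i \<and> j0 \<le> j \<longrightarrow> \<bar>mm (U i j) - L\<bar> < e)"
      by (intro exI[of _ i0]) auto
  qed
  obtain B where BE: "B \<in> E" and nB: "net_conv (dmu mp) U B"
    using cond[rule_format, of A L] AE net1 net2 unfolding U_def by blast
  have BF: "B \<in> F" using BE EF by blast
  show "\<exists>a\<in>E. \<forall>e>0. \<exists>N. \<forall>n\<ge>N. dmu mp (s n) a < e"
  proof (intro bexI[OF _ BE] allI impI)
    fix e :: real assume e: "e > 0"
    obtain i0 j0 where ij0: "\<forall>i j. i \<le> j \<and> i0 \<le> i \<and> j0 \<le> j \<longrightarrow> dmu mp (U i j) B < e/3"
      using nB e unfolding net_conv_def by (metis divide_pos_pos zero_less_numeral)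
    obtain k where k: "\<forall>i\<ge>k. 2*(1/2::real)^i < e/3" using small[of "e/3"] e by auto
    define i where "i = max k i0"
    define j where "j = max i j0"
    have b1: "dmu mp (U i j) B < e/3" using ij0 unfolding i_def j_def by auto
    have b2: "dmu mp (U i j) (A i) \<le> 2*(1/2)^i" using UA unfolding j_def by auto
    have b3: "2*(1/2::real)^i < e/3" using k unfolding i_def by auto
    show "\<exists>N. \<forall>m\<ge>N. dmu mp (s m) B < e"
    proof (intro exI allI impI)
      fix m assume m: "n i \<le> m"
      have c1: "dmu mp (s m) (A i) < (1/2)^i" using Acl m by auto
      have t1: "dmu mp (s m) B \<le> dmu mp (s m) (A i) + dmu mp (A i) B" by (rule tri) (use sF AF BF in auto)
      have t2: "dmu mp (A i) B \<le> dmu mp (A i) (U i j) + dmu mp (U i j) B" by (rule tri) (use UF AF BF in auto)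
      have t3: "dmu mp (A i) (U i j) = dmu mp (U i j) (A i)" by (rule dsym)
      have "(0::real) \<le> (1/2)^i" by simp
      then show "dmu mp (s m) B < e" using c1 t1 t2 t3 b1 b2 b3 by linarith
    qed
  qed
qed

end
theorem theorem3p3:
  fixes X :: "'a set" and F E :: "'a set set" and mp mm :: "'a set \<Rightarrow> real"
  assumes "field_of_sets X F"
    and "E \<subseteq> F"
    and "conjugate_pair X F mp mm"
    and "\<forall>A\<in>E. mp A = mm A"
  shows "pm_complete E (dmu mp) \<longleftrightarrow>
    (\<forall>(A :: nat \<Rightarrow> 'a set) (L :: real).
       (\<forall>k. A k \<in> E) \<and>
       net_conv real_dist (\<lambda>i j. mp (\<Union>k\<in>{i..j}. A k)) L \<and>
       net_conv real_dist (\<lambda>i j. mm (\<Union>k\<in>{i..j}. A k)) L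
       \<longrightarrow> (\<exists>B\<in>E. net_conv (dmu mp) (\<lambda>i j. \<Union>k\<in>{i..j}. A k) B \<and> mp B = L))"
proof -
  interpret cpl X F mp mm using assms(1,3) by unfold_locales
  show ?thesis
  proof
    assume c: "pm_complete E (dmu mp)"
    show "\<forall>(A :: nat \<Rightarrow> 'a set) (L :: real).
       (\<forall>k. A k \<in> E) \<and>
       net_conv real_dist (\<lambda>i j. mp (\<Union>k\<in>{i..j}. A k)) L \<and>
       net_conv real_dist (\<lambda>i j. mm (\<Union>k\<in>{i..j}. A k)) L
       \<longrightarrow> (\<exists>B\<in>E. net_conv (dmu mp) (\<lambda>i j. \<Union>k\<in>{i..j}. A k) B \<and> mp B = L)"
      using fwd[OF assms(2,4) c] by blast
  next
    assume c: "\<forall>(A :: nat \<Rightarrow> 'a set) (L :: real).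
       (\<forall>k. A k \<in> E) \<and>
       net_conv real_dist (\<lambda>i j. mp (\<Union>k\<in>{i..j}. A k)) L \<and>
       net_conv real_dist (\<lambda>i j. mm (\<Union>k\<in>{i..j}. A k)) L
       \<longrightarrow> (\<exists>B\<in>E. net_conv (dmu mp) (\<lambda>i j. \<Union>k\<in>{i..j}. A k) B \<and> mp B = L)"
    show "pm_complete E (dmu mp)" by (rule bwd[OF assms(2,4) c])
  qed
qed

end
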